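(* Assume $p,q\in[0,1]$. For all $n\ge2$, almost surely, $$\widetilde M_n-\widetilde L_n\le Y_n-Z_n\le M_n.$$
   Context: Ulam–Harris labels: $\mathcal U_n=\mathbb N^n$ ($n\ge0$, $\mathcal U_0=\{\emptyset\}$), $\mathcal U=\bigcup_{n\ge0}\mathcal U_n$; for $u=u_1\dots u_k$ write $ui=u_1\dots u_ki$. Let $(\xi_u)_{u\in\mathcal U}$ be i.i.d. Poisson with mean $1+p$, and $(\delta_{u,v})_{u,v\in\mathcal U}$, $(\mu_{\{u,v\}})_{u\ne v\in\mathcal U}$ i.i.d. Bernoulli with mean $q$, all independent. The process $\mathcal G(p,q)=(G_n)_{n\ge0}$, $G_n=(V_n,E_n)$: $G_0=(\{\emptyset\},\emptyset)$, and $I_m=V_m\cap\mathcal U_m$. Given $G_{n-1}$ ($n\ge1$): (1) for $u\in I_{n-1}$ let $\mathcal K_u=\{v\in V_{n-1}:d_{G_{n-1}}(u,v)=3\}$ and $\mathcal C_u=\{j\in\mathbb N:j\le\xi_u,\ \delta_{v,uj}=0\ \forall v\in\mathcal K_u\}$; let $\tilde G_n$ have vertex set $V_{n-1}\cup\{ui:u\in I_{n-1},i\in\mathcal C_u\}$ and edge set $E_{n-1}\cup\{\{u,ui\}:u\in I_{n-1},i\in\mathcal C_u\}$, and $\tilde I_n$ its set of vertices in $\mathcal U_n$. (2) For $u,v\in\tilde I_n$ write $u\overset{m}{\sim}v$ iff $d_{\tilde G_n}(u,v)=4$ and $\mu_{\{u,v\}}=1$; let $\sim$ be the equivalence relation on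 $\tilde I_n$ generated by $\overset m\sim$, and $\pi(u)$ the lexicographically smallest element of the class of $u$. Then $V_n=V_{n-1}\cup\{\pi(u):u\in\tilde I_n\}$, $E_n=E_{n-1}\cup\{\{v,\pi(vi)\}:v\in I_{n-1},i\in\mathcal C_v\}$. Let $Z_n=|I_n|$ and $Y_n=\sum_{u\in I_{n-1}}|\mathcal C_u|=|\tilde I_n|$. For $\tilde u\in\tilde I_n$, $\tilde\alpha(\tilde u)=\{\tilde u\}\cup\bigcup_{1\le j\le n}\{x\in I_{n-j}:d_{\tilde G_n}(x,\tilde u)=j\}$ and $\tilde\alpha_2(\tilde u)=\tilde\alpha(\tilde u)\cap I_{n-2}$; $\tilde J^{(2)}_n=\{\tilde u\in\tilde I_n:|\tilde\alpha_2(\tilde u)|=1\}$. $M_n=|\{\{u,v\}:u,v\in\tilde I_n,\ u\overset m\sim v\}|$, $\widetilde M_n=|\{\{u,v\}:u,v\in\tilde J^{(2)}_n,\ u\overset m\sim v\}|$, and $\widetilde L_n=|\{(u,v,w)\in(\tilde J^{(2)}_n)^3:u\overset m\sim v,\ v\overset m\sim w,\ u\ne w\}|$. *)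

theory Defs
  imports "HOL-Probability.Probability" "HOL-Library.List_Lexorder"
begin

(* Ulam-Harris labels: lists of positive naturals *)
type_synonym lab = "nat list"
type_synonym graph = "lab set \<times> lab set set"
type_synonym omega = "(lab \<Rightarrow> nat) \<times> ((lab \<times> lab) \<Rightarrow> bool) \<times> (lab set \<Rightarrow> bool)"

definition ULab :: "lab set" where
  "ULab = {u. \<forall>i\<in>set u. 0 < i}"

definition UPairs :: "lab set set" where
  "UPairs = {{u, v} | u v. u \<in> ULab \<and> v \<in> ULab \<and> u \<noteq> v}"

definition Pspace :: "real \<Rightarrow> real \<Rightarrow> omega measure" where
  "Pspace p q =
     (PiM ULab (\<lambda>_. measure_pmf (poisson_pmf (1 + p))))
     \<Otimes>\<^sub>M ((PiM (ULab \<times> ULab) (\<lambda>_. measure_pmf (bernoulli_pmf q)))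
     \<Otimes>\<^sub>M (PiM UPairs (\<lambda>_. measure_pmf (bernoulli_pmf q))))"

definition xi_of :: "omega \<Rightarrow> lab \<Rightarrow> nat" where "xi_of \<omega> = fst \<omega>"
definition delta_of :: "omega \<Rightarrow> lab \<times> lab \<Rightarrow> bool" where "delta_of \<omega> = fst (snd \<omega>)"
definition mu_of :: "omega \<Rightarrow> lab set \<Rightarrow> bool" where "mu_of \<omega> = snd (snd \<omega>)"

fun walkn :: "lab set set \<Rightarrow> nat \<Rightarrow> lab \<Rightarrow> lab \<Rightarrow> bool" where
  "walkn E 0 u v = (u = v)"
| "walkn E (Suc k) u v = (\<exists>w. {u, w} \<in> E \<and> walkn E k w v)"

definition has_dist :: "lab set set \<Rightarrow> lab \<Rightarrow> lab \<Rightarrow> nat \<Rightarrow> bool" where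
  "has_dist E u v d \<longleftrightarrow> walkn E d u v \<and> (\<forall>k<d. \<not> walkn E k u v)"

definition Gen :: "nat \<Rightarrow> lab set \<Rightarrow> lab set" where
  "Gen m V = {u \<in> V. length u = m}"

definition Kset :: "graph \<Rightarrow> lab \<Rightarrow> lab set" where
  "Kset G u = {v \<in> fst G. has_dist (snd G) u v 3}"

(* C_u, computed from G_{n-1} *)
definition Cset :: "omega \<Rightarrow> graph \<Rightarrow> lab \<Rightarrow> nat set" where
  "Cset \<omega> G u = {j. 1 \<le> j \<and> j \<le> xi_of \<omega> u \<and> (\<forall>v\<in>Kset G u. \<not> delta_of \<omega> (v, u @ [j]))}"

(* tilde G_n from G = G_{n-1} *)
definition tilde_graph :: "omega \<Rightarrow> nat \<Rightarrow> graph \<Rightarrow> graph" where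
  "tilde_graph \<omega> n G =
    (let I = Gen (n - 1) (fst G) in
     (fst G \<union> {u @ [i] | u i. u \<in> I \<and> i \<in> Cset \<omega> G u},
      snd G \<union> {{u, u @ [i]} | u i. u \<in> I \<and> i \<in> Cset \<omega> G u}))"

definition msim :: "omega \<Rightarrow> graph \<Rightarrow> lab \<Rightarrow> lab \<Rightarrow> bool" where
  "msim \<omega> Gt u v \<longleftrightarrow> has_dist (snd Gt) u v 4 \<and> mu_of \<omega> {u, v}"

definition simrel :: "omega \<Rightarrow> nat \<Rightarrow> graph \<Rightarrow> (lab \<times> lab) set" where
  "simrel \<omega> n Gt =
     (let It = Gen n (fst Gt) in
      {(u, v). u \<in> It \<and> v \<in> It \<and>
        (u, v) \<in> ({(x, y). x \<in> It \<and> y \<in> It \<and> (msim \<omega> Gt x y \<or> msim \<omega> Gt y x)})\<^sup>*})"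

(* pi(u): lexicographically smallest element of the class of u *)
definition piu :: "omega \<Rightarrow> nat \<Rightarrow> graph \<Rightarrow> lab \<Rightarrow> lab" where
  "piu \<omega> n Gt u = Min {v. (u, v) \<in> simrel \<omega> n Gt}"

definition next_graph :: "omega \<Rightarrow> nat \<Rightarrow> graph \<Rightarrow> graph" where
  "next_graph \<omega> n G =
    (let Gt = tilde_graph \<omega> n G; I = Gen (n - 1) (fst G) in
     (fst G \<union> piu \<omega> n Gt ` Gen n (fst Gt),
      snd G \<union> {{v, piu \<omega> n Gt (v @ [i])} | v i. v \<in> I \<and> i \<in> Cset \<omega> G v}))"

fun Gproc :: "omega \<Rightarrow> nat \<Rightarrow> graph" where
  "Gproc \<omega> 0 = ({[]}, {})"
| "Gproc \<omega> (Suc n) = next_graph \<omega> (Suc n) (Gproc \<omega> n)"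

definition Iset :: "omega \<Rightarrow> nat \<Rightarrow> lab set" where
  "Iset \<omega> m = Gen m (fst (Gproc \<omega> m))"

definition Gtil :: "omega \<Rightarrow> nat \<Rightarrow> graph" where
  "Gtil \<omega> n = tilde_graph \<omega> n (Gproc \<omega> (n - 1))"

definition Itil :: "omega \<Rightarrow> nat \<Rightarrow> lab set" where
  "Itil \<omega> n = Gen n (fst (Gtil \<omega> n))"

definition Zn :: "omega \<Rightarrow> nat \<Rightarrow> nat" where
  "Zn \<omega> n = card (Iset \<omega> n)"

definition Yn :: "omega \<Rightarrow> nat \<Rightarrow> nat" where
  "Yn \<omega> n = (\<Sum>u\<in>Iset \<omega> (n - 1). card (Cset \<omega> (Gproc \<omega> (n - 1)) u))"

definition alpha_t :: "omega \<Rightarrow> nat \<Rightarrow> lab \<Rightarrow> lab set" where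
  "alpha_t \<omega> n ut = {ut} \<union> (\<Union>j\<in>{1..n}. {x \<in> Iset \<omega> (n - j). has_dist (snd (Gtil \<omega> n)) x ut j})"

definition alpha2_t :: "omega \<Rightarrow> nat \<Rightarrow> lab \<Rightarrow> lab set" where
  "alpha2_t \<omega> n ut = alpha_t \<omega> n ut \<inter> Iset \<omega> (n - 2)"

definition J2 :: "omega \<Rightarrow> nat \<Rightarrow> lab set" where
  "J2 \<omega> n = {ut \<in> Itil \<omega> n. card (alpha2_t \<omega> n ut) = 1}"

definition Mn :: "omega \<Rightarrow> nat \<Rightarrow> nat" where
  "Mn \<omega> n = card {{u, v} | u v. u \<in> Itil \<omega> n \<and> v \<in> Itil \<omega> n \<and> msim \<omega> (Gtil \<omega> n) u v}"

definition Mt :: "omega \<Rightarrow> nat \<Rightarrow> nat" where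
  "Mt \<omega> n = card {{u, v} | u v. u \<in> J2 \<omega> n \<and> v \<in> J2 \<omega> n \<and> msim \<omega> (Gtil \<omega> n) u v}"

definition Lt :: "omega \<Rightarrow> nat \<Rightarrow> nat" where
  "Lt \<omega> n = card {(u, v, w). u \<in> J2 \<omega> n \<and> v \<in> J2 \<omega> n \<and> w \<in> J2 \<omega> n \<and>
                     msim \<omega> (Gtil \<omega> n) u v \<and> msim \<omega> (Gtil \<omega> n) v w \<and> u \<noteq> w}"

end

theory Submission imports Defs begin
definition Rr :: "'a set \<Rightarrow> ('a \<Rightarrow> 'a \<Rightarrow> bool) \<Rightarrow> ('a \<times> 'a) set" where
  "Rr T M = {(x,y). x\<in>T \<and> y\<in>T \<and> (M x y \<or> M y x)}"
definition Ss :: "'a set \<Rightarrow> ('a \<Rightarrow> 'a \<Rightarrow> bool) \<Rightarrow> ('a \<times> 'a) set" where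
  "Ss T M = {(u,v). u\<in>T \<and> v\<in>T \<and> (u,v)\<in>(Rr T M)\<^sup>*}"
definition pii :: "'a::linorder set \<Rightarrow> ('a \<Rightarrow> 'a \<Rightarrow> bool) \<Rightarrow> 'a \<Rightarrow> 'a" where
  "pii T M u = Min {v. (u,v) \<in> Ss T M}"

lemma fin_pairs:
  assumes "finite T"
  shows "finite {{u,v} | u v. u\<in>T \<and> v\<in>T \<and> M u v}"
proof -
  have s: "{{u,v} | u v. u\<in>T \<and> v\<in>T \<and> M u v} \<subseteq> (\<lambda>p. {fst p, snd p}) ` (T \<times> T)"
  proof (rule subsetI)
    fix e assume "e \<in> {{u,v} | u v. u\<in>T \<and> v\<in>T \<and> M u v}"
    then obtain u v where "e = {u,v}" "u\<in>T" "v\<in>T" by blast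
    then show "e \<in> (\<lambda>p. {fst p, snd p}) ` (T \<times> T)" by (intro image_eqI[of _ _ "(u,v)"]) auto
  qed
  have "finite ((\<lambda>p. {fst p, snd p}) ` (T \<times> T))" using assms by simp
  then show ?thesis using s by (rule finite_subset[rotated])
qed
lemma fin_trip:
  assumes "finite J"
  shows "finite {(u,v,w). u\<in>J \<and> v\<in>J \<and> w\<in>J \<and> M u v \<and> M v w \<and> u \<noteq> w}"
proof -
  have s: "{(u,v,w). u\<in>J \<and> v\<in>J \<and> w\<in>J \<and> M u v \<and> M v w \<and> u \<noteq> w} \<subseteq> J \<times> J \<times> J" by auto
  have "finite (J \<times> J \<times> J)" using assms by simp
  then show ?thesis using s by (rule finite_subset[rotated])
qed

locale cls =
  fixes T :: "'a::linorder set" and M :: "'a \<Rightarrow> 'a \<Rightarrow> bool"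
  assumes finT: "finite T" and symM: "M x y \<Longrightarrow> M y x" and irrM: "\<not> M x x"
begin

lemma R_sym: "sym (Rr T M)"
  unfolding Rr_def sym_def by auto

lemma Rs_sym: "(u,v) \<in> (Rr T M)\<^sup>* \<Longrightarrow> (v,u) \<in> (Rr T M)\<^sup>*"
  using R_sym sym_rtrancl unfolding sym_def by blast

lemma cl_sub: "{v. (u,v) \<in> Ss T M} \<subseteq> T" unfolding Ss_def by auto

lemma pi_in: assumes "u \<in> T" shows "pii T M u \<in> T" "(u, pii T M u) \<in> Ss T M"
proof -
  have f: "finite {v. (u,v) \<in> Ss T M}" using finT cl_sub by (rule finite_subset[rotated])
  have ne: "u \<in> {v. (u,v) \<in> Ss T M}" using assms unfolding Ss_def by auto
  have "pii T M u \<in> {v. (u,v) \<in> Ss T M}" unfolding pii_def using Min_in[OF f] ne by blast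
  then show "pii T M u \<in> T" "(u, pii T M u) \<in> Ss T M" using cl_sub by auto
qed

lemma cl_eq: assumes "(u,v) \<in> Ss T M" shows "{w. (u,w) \<in> Ss T M} = {w. (v,w) \<in> Ss T M}"
proof -
  have uv: "u \<in> T" "v \<in> T" "(u,v) \<in> (Rr T M)\<^sup>*" using assms unfolding Ss_def by auto
  have vu: "(v,u) \<in> (Rr T M)\<^sup>*" by (rule Rs_sym[OF uv(3)])
  show ?thesis
  proof (intro set_eqI iffI)
    fix w assume "w \<in> {w. (u,w) \<in> Ss T M}"
    then have "w \<in> T" "(u,w) \<in> (Rr T M)\<^sup>*" unfolding Ss_def by auto
    then show "w \<in> {w. (v,w) \<in> Ss T M}" using vu uv unfolding Ss_def by (auto intro: rtrancl_trans)
  next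
    fix w assume "w \<in> {w. (v,w) \<in> Ss T M}"
    then have "w \<in> T" "(v,w) \<in> (Rr T M)\<^sup>*" unfolding Ss_def by auto
    then show "w \<in> {w. (u,w) \<in> Ss T M}" using uv unfolding Ss_def by (auto intro: rtrancl_trans)
  qed
qed

lemma pi_eq: assumes "(u,v) \<in> Ss T M" shows "pii T M u = pii T M v"
  unfolding pii_def using cl_eq[OF assms] by simp

lemma pi_idem: assumes "u \<in> T" shows "pii T M (pii T M u) = pii T M u"
  using pi_eq[OF pi_in(2)[OF assms]] by simp

definition Nr where "Nr = T - pii T M ` T"

lemma card_Nr: "card Nr = card T - card (pii T M ` T)" "pii T M ` T \<subseteq> T"
  unfolding Nr_def using pi_in finT by (auto intro!: card_Diff_subset finite_imageI)

lemma upper: "card Nr \<le> card {{u,v} | u v. u\<in>T \<and> v\<in>T \<and> M u v}"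
proof -
  define d where "d u = (LEAST k. (u, pii T M u) \<in> (Rr T M)^^k)" for u
  define f where "f u = (SOME y. (u,y) \<in> Rr T M \<and> (y, pii T M u) \<in> (Rr T M)^^(d u - 1))" for u
  have key: "(u, f u) \<in> Rr T M \<and> d (f u) < d u" if u: "u \<in> Nr" for u
  proof -
    have uT: "u \<in> T" using u unfolding Nr_def by auto
    have ne: "u \<noteq> pii T M u" using u uT unfolding Nr_def by (metis DiffE imageI)
    have "(u, pii T M u) \<in> (Rr T M)\<^sup>*" using pi_in(2)[OF uT] unfolding Ss_def by auto
    then obtain k where "(u, pii T M u) \<in> (Rr T M)^^k" using rtrancl_power by blast
    then have dk: "(u, pii T M u) \<in> (Rr T M)^^(d u)" unfolding d_def by (rule LeastI)
    have "d u \<noteq> 0" using dk ne by (cases "d u") auto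
    then have "(u, pii T M u) \<in> (Rr T M)^^(Suc (d u - 1))" using dk by simp
    then have "\<exists>y. (u,y) \<in> Rr T M \<and> (y, pii T M u) \<in> (Rr T M)^^(d u - 1)"
      by (rule relpow_Suc_D2)
    then have fu: "(u,f u) \<in> Rr T M \<and> (f u, pii T M u) \<in> (Rr T M)^^(d u - 1)"
      unfolding f_def by (rule someI_ex)
    then have r: "(u, f u) \<in> Rr T M" and fu2: "(f u, pii T M u) \<in> (Rr T M)^^(d u - 1)" by (rule conjunct1, rule conjunct2)
    have "u \<in> T" "f u \<in> T" using r unfolding Rr_def by auto
    then have "(u, f u) \<in> Ss T M" unfolding Ss_def using r by (blast intro: r_into_rtrancl)
    then have "pii T M u = pii T M (f u)" by (rule pi_eq)
    then have "(f u, pii T M (f u)) \<in> (Rr T M)^^(d u - 1)" using fu2 by simp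
    then have "d (f u) \<le> d u - 1" unfolding d_def by (rule Least_le)
    then have "d (f u) < d u" using \<open>d u \<noteq> 0\<close> by linarith
    then show ?thesis using r by blast
  qed
  have fin: "finite {{u,v} | u v. u\<in>T \<and> v\<in>T \<and> M u v}"
    using finT by (rule fin_pairs)
  have inj: "inj_on (\<lambda>u. {u, f u}) Nr"
  proof (rule inj_onI)
    fix x y assume x: "x \<in> Nr" and y: "y \<in> Nr" and eq: "{x, f x} = {y, f y}"
    show "x = y"
    proof (rule ccontr)
      assume xy: "x \<noteq> y"
      have "x \<in> {y, f y}" using eq by blast
      then have e1: "f y = x" using xy by blast
      have "y \<in> {x, f x}" using eq by blast
      then have e2: "f x = y" using xy by blast
      have "d x < d y" using key[OF y] unfolding e1 by simp
      moreover have "d y < d x" using key[OF x] unfolding e2 by simp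
      ultimately show False by simp
    qed
  qed
  have sub: "(\<lambda>u. {u, f u}) ` Nr \<subseteq> {{u,v} | u v. u\<in>T \<and> v\<in>T \<and> M u v}"
  proof
    fix e assume "e \<in> (\<lambda>u. {u, f u}) ` Nr"
    then obtain u where u: "u \<in> Nr" and e: "e = {u, f u}" by blast
    have "(u, f u) \<in> Rr T M" using key[OF u] by blast
    then have uT: "u \<in> T" "f u \<in> T" and m: "M u (f u) \<or> M (f u) u" unfolding Rr_def by auto
    show "e \<in> {{u,v} | u v. u\<in>T \<and> v\<in>T \<and> M u v}"
    proof (cases "M u (f u)")
      case True then show ?thesis using e uT by blast
    next
      case False
      then have m2: "M (f u) u" using m by blast
      have "e = {f u, u}" using e by (simp add: insert_commute)
      then show ?thesis using m2 uT by blast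
    qed
  qed
  show ?thesis using card_inj_on_le[OF inj sub fin] .
qed

lemma lower:
  assumes J: "J \<subseteq> T"
  shows "card {{u,v} | u v. u\<in>J \<and> v\<in>J \<and> M u v}
     \<le> card {(u,v,w). u\<in>J \<and> v\<in>J \<and> w\<in>J \<and> M u v \<and> M v w \<and> u \<noteq> w} + card Nr"
proof -
  define EJ where "EJ = {{u,v} | u v. u\<in>J \<and> v\<in>J \<and> M u v}"
  define P where "P = {(u,v,w). u\<in>J \<and> v\<in>J \<and> w\<in>J \<and> M u v \<and> M v w \<and> u \<noteq> w}"
  define Nn where "Nn = {e\<in>EJ. \<exists>e'\<in>EJ. e' \<noteq> e \<and> e \<inter> e' \<noteq> {}}"
  define Iso where "Iso = EJ - Nn"
  have finJ: "finite J" using finT J by (rule finite_subset[rotated])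
  have finEJ: "finite EJ" unfolding EJ_def using finJ by (rule fin_pairs)
  have finP: "finite P" unfolding P_def using finJ by (rule fin_trip)
  have finNr: "finite Nr" unfolding Nr_def using finT by simp
  have NnE: "Nn \<subseteq> EJ" unfolding Nn_def by blast
  have c0: "card Iso = card EJ - card Nn" unfolding Iso_def using NnE finEJ
    by (simp add: card_Diff_subset finite_subset)
  have c0': "card Nn \<le> card EJ" using NnE finEJ by (rule card_mono[rotated])
  define h where "h e = (SOME t. t \<in> P \<and> e = {fst t, fst (snd t)})" for e
  have hP: "h e \<in> P \<and> e = {fst (h e), fst (snd (h e))}" if e: "e \<in> Nn" for e
  proof -
    have eEJ: "e \<in> EJ" and ex: "\<exists>e'\<in>EJ. e' \<noteq> e \<and> e \<inter> e' \<noteq> {}" using e unfolding Nn_def by blast+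
    obtain a b where ab: "e = {a,b}" "a \<in> J" "b \<in> J" "M a b" using eEJ unfolding EJ_def by blast
    obtain e' where e': "e' \<in> EJ" "e' \<noteq> e" "e \<inter> e' \<noteq> {}" using ex by blast
    obtain c d where cd: "e' = {c,d}" "c \<in> J" "d \<in> J" "M c d" using e'(1) unfolding EJ_def by blast
    have ne: "{c,d} \<noteq> {a,b}" using e'(2) cd(1) ab(1) by simp
    have ba: "M b a" using symM[OF ab(4)] .
    have dc: "M d c" using symM[OF cd(4)] .
    have "\<exists>t. t \<in> P \<and> e = {fst t, fst (snd t)}"
    proof -
      have "{a,b} \<inter> {c,d} \<noteq> {}" using e'(3) ab(1) cd(1) by simp
      then consider "a = c" | "a = d" | "b = c" | "b = d" by auto
      then show ?thesis
      proof cases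
        case 1
        then have "b \<noteq> d" using ne by auto
        then have "(b,a,d) \<in> P" using ab cd ba 1 unfolding P_def by simp
        moreover have "e = {fst (b,a,d), fst (snd (b,a,d))}" using ab(1) by (simp add: insert_commute)
        ultimately show ?thesis by blast
      next
        case 2
        then have "b \<noteq> c" using ne by auto
        then have "(b,a,c) \<in> P" using ab cd ba dc 2 unfolding P_def by simp
        moreover have "e = {fst (b,a,c), fst (snd (b,a,c))}" using ab(1) by (simp add: insert_commute)
        ultimately show ?thesis by blast
      next
        case 3
        then have "a \<noteq> d" using ne by auto
        then have "(a,b,d) \<in> P" using ab cd 3 unfolding P_def by simp
        moreover have "e = {fst (a,b,d), fst (snd (a,b,d))}" using ab(1) by simp
        ultimately show ?thesis by blast
      next
        case 4
        then have "a \<noteq> c" using ne by auto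
        then have "(a,b,c) \<in> P" using ab cd dc 4 unfolding P_def by simp
        moreover have "e = {fst (a,b,c), fst (snd (a,b,c))}" using ab(1) by simp
        ultimately show ?thesis by blast
      qed
    qed
    then show ?thesis unfolding h_def by (rule someI_ex)
  qed
  have c2: "card Nn \<le> card P"
  proof (rule card_inj_on_le[OF _ _ finP])
    show "inj_on h Nn"
    proof (rule inj_onI)
      fix x y assume "x \<in> Nn" "y \<in> Nn" "h x = h y"
      then show "x = y" using hP[of x] hP[of y] by simp
    qed
    show "h ` Nn \<subseteq> P" using hP by blast
  qed
  define g where "g e = (SOME x. x \<in> e \<and> x \<in> Nr)" for e
  have gN: "g e \<in> e \<and> g e \<in> Nr" if e: "e \<in> Iso" for e
  proof -
    have "e \<in> EJ" using e unfolding Iso_def by blast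
    then obtain a b where ab: "e = {a,b}" "a \<in> J" "b \<in> J" "M a b" unfolding EJ_def by blast
    have aT: "a \<in> T" "b \<in> T" using ab J by auto
    have "(a,b) \<in> Rr T M" using ab aT unfolding Rr_def by simp
    then have "(a,b) \<in> Ss T M" using aT unfolding Ss_def by simp
    then have pe: "pii T M a = pii T M b" by (rule pi_eq)
    have "a \<noteq> b" using ab irrM by metis
    have "\<exists>x. x \<in> e \<and> x \<in> Nr"
    proof (rule ccontr)
      assume "\<not> ?thesis"
      then have "a \<notin> Nr" "b \<notin> Nr" using ab(1) by blast+
      then have "a \<in> pii T M ` T" "b \<in> pii T M ` T" using aT unfolding Nr_def by blast+
      then obtain a' b' where "a' \<in> T" "a = pii T M a'" "b' \<in> T" "b = pii T M b'" by blast
      then have "pii T M a = a" "pii T M b = b" using pi_idem by metis+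
      then show False using pe \<open>a \<noteq> b\<close> by simp
    qed
    then show ?thesis unfolding g_def by (rule someI_ex)
  qed
  have c3: "card Iso \<le> card Nr"
  proof (rule card_inj_on_le[OF _ _ finNr])
    show "inj_on g Iso"
    proof (rule inj_onI)
      fix x y assume x: "x \<in> Iso" and y: "y \<in> Iso" and eq: "g x = g y"
      show "x = y"
      proof (rule ccontr)
        assume xy: "x \<noteq> y"
        have xE: "x \<in> EJ" and yE: "y \<in> EJ" using x y unfolding Iso_def by blast+
        have "g x \<in> x \<inter> y" using gN[OF x] gN[OF y] eq by simp
        then have "x \<inter> y \<noteq> {}" by blast
        then have "x \<in> Nn" unfolding Nn_def using xE yE xy by blast
        then show False using x unfolding Iso_def by blast
      qed
    qed
    show "g ` Iso \<subseteq> Nr" using gN by blast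
  qed
  have "card EJ \<le> card P + card Nr" using c0 c0' c2 c3 by linarith
  then show ?thesis unfolding EJ_def P_def .
qed

end
lemma walkn_snoc: "walkn E (Suc k) u v = (\<exists>w. walkn E k u w \<and> {w,v} \<in> E)"
  by (induction k arbitrary: u) auto

lemma walkn_sym: "walkn E k u v \<Longrightarrow> walkn E k v u"
proof (induction k arbitrary: u v)
  case 0 then show ?case by simp
next
  case (Suc k)
  then obtain w where "{u,w} \<in> E" "walkn E k w v" by auto
  then have "walkn E k v w" "{w,u} \<in> E" using Suc.IH by (auto simp: insert_commute)
  then show ?case using walkn_snoc by blast
qed

lemma has_dist_sym: "has_dist E u v d \<Longrightarrow> has_dist E v u d"
  unfolding has_dist_def using walkn_sym by blast

lemma msim_sym: "msim \<omega> Gt u v \<Longrightarrow> msim \<omega> Gt v u"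
  unfolding msim_def using has_dist_sym by (metis insert_commute)

lemma msim_irr: "\<not> msim \<omega> Gt u u"
  unfolding msim_def has_dist_def by (metis walkn.simps(1) zero_less_numeral)

lemma simrel_eq: "simrel \<omega> n Gt = Ss (Gen n (fst Gt)) (msim \<omega> Gt)"
  unfolding simrel_def Ss_def Rr_def Let_def by simp

lemma piu_eq: "piu \<omega> n Gt = pii (Gen n (fst Gt)) (msim \<omega> Gt)"
  unfolding piu_def pii_def simrel_eq by (rule ext) simp

lemma finite_Cset: "finite (Cset \<omega> G u)"
  by (rule finite_subset[of _ "{1..xi_of \<omega> u}"]) (auto simp: Cset_def)

lemma fst_tilde: "fst (tilde_graph \<omega> n G) = fst G \<union> (\<lambda>(u,i). u @ [i]) ` (SIGMA u:Gen (n - 1) (fst G). Cset \<omega> G u)"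
  unfolding tilde_graph_def Let_def by auto

lemma fin_len: "finite (fst (Gproc \<omega> m)) \<and> (\<forall>v\<in>fst (Gproc \<omega> m). length v \<le> m)"
proof (induction m)
  case 0 then show ?case by simp
next
  case (Suc m)
  define G where "G = Gproc \<omega> m"
  define Gt where "Gt = tilde_graph \<omega> (Suc m) G"
  have fG: "finite (fst G)" using Suc G_def by simp
  have fGt: "finite (fst Gt)" unfolding Gt_def fst_tilde
    using fG finite_Cset by (auto simp: Gen_def)
  have fT: "finite (Gen (Suc m) (fst Gt))" using fGt by (auto simp: Gen_def)
  interpret cls "Gen (Suc m) (fst Gt)" "msim \<omega> Gt"
    apply unfold_locales
    using fT apply simp
     apply (erule msim_sym)
    apply (rule msim_irr)
    done
  have "Gproc \<omega> (Suc m) = next_graph \<omega> (Suc m) G" using G_def by simp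
  then have eq: "fst (Gproc \<omega> (Suc m)) = fst G \<union> pii (Gen (Suc m) (fst Gt)) (msim \<omega> Gt) ` Gen (Suc m) (fst Gt)"
    unfolding next_graph_def Let_def Gt_def piu_eq by simp
  have "\<forall>v\<in>pii (Gen (Suc m) (fst Gt)) (msim \<omega> Gt) ` Gen (Suc m) (fst Gt). length v = Suc m"
    using pi_in(1) by (auto simp: Gen_def)
  then show ?case unfolding eq using Suc G_def fG fT by fastforce
qed

lemma pointwise:
  assumes "2 \<le> n"
  shows "int (Mt \<omega> n) - int (Lt \<omega> n) \<le> int (Yn \<omega> n) - int (Zn \<omega> n)
         \<and> int (Yn \<omega> n) - int (Zn \<omega> n) \<le> int (Mn \<omega> n)"
proof -
  obtain m where n: "n = Suc m" using assms by (cases n) auto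
  define G where "G = Gproc \<omega> m"
  define Gt where "Gt = tilde_graph \<omega> n G"
  define T where "T = Gen n (fst Gt)"
  have GtG: "Gtil \<omega> n = Gt" unfolding Gtil_def Gt_def G_def n by simp
  have TI: "Itil \<omega> n = T" unfolding Itil_def GtG T_def ..
  have fG: "finite (fst G)" and lG: "\<forall>v\<in>fst G. length v \<le> m" using fin_len G_def by auto
  have Im: "Iset \<omega> m = Gen m (fst G)" unfolding Iset_def G_def ..
  have Teq: "T = (\<lambda>(u,i). u @ [i]) ` (SIGMA u:Iset \<omega> m. Cset \<omega> G u)"
    unfolding T_def Gt_def fst_tilde Im n using lG by (auto simp: Gen_def)
  have fI: "finite (Iset \<omega> m)" unfolding Im using fG by (auto simp: Gen_def)
  have inj: "inj_on (\<lambda>(u,i). u @ [i]) (SIGMA u:Iset \<omega> m. Cset \<omega> G u)"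
    by (rule inj_onI) auto
  have Y: "Yn \<omega> n = card T"
    unfolding Yn_def Teq card_image[OF inj] using fI finite_Cset
    by (simp add: card_SigmaI n G_def)
  have fT: "finite T" unfolding Teq using fI finite_Cset by auto
  interpret cls T "msim \<omega> Gt"
    apply unfold_locales
    using fT apply simp
     apply (erule msim_sym)
    apply (rule msim_irr)
    done
  have "Gproc \<omega> n = next_graph \<omega> n G" using G_def n by simp
  then have eq: "fst (Gproc \<omega> n) = fst G \<union> pii T (msim \<omega> Gt) ` T"
    unfolding next_graph_def Let_def Gt_def piu_eq T_def by simp
  have "\<forall>v\<in>pii T (msim \<omega> Gt) ` T. length v = n"
    using pi_in(1) by (auto simp: T_def Gen_def)
  then have In: "Iset \<omega> n = pii T (msim \<omega> Gt) ` T"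
    unfolding Iset_def eq using lG n by (auto simp: Gen_def)
  have Z: "Zn \<omega> n = card (pii T (msim \<omega> Gt) ` T)" unfolding Zn_def In ..
  have YZ: "int (Yn \<omega> n) - int (Zn \<omega> n) = int (card Nr)"
    unfolding Y Z using card_Nr fT card_mono by (metis of_nat_diff)
  have M: "Mn \<omega> n = card {{u,v} | u v. u\<in>T \<and> v\<in>T \<and> msim \<omega> Gt u v}"
    unfolding Mn_def TI GtG ..
  have J: "J2 \<omega> n \<subseteq> T" unfolding J2_def TI by auto
  have "card {{u,v} | u v. u\<in>J2 \<omega> n \<and> v\<in>J2 \<omega> n \<and> msim \<omega> Gt u v}
     \<le> card {(u,v,w). u\<in>J2 \<omega> n \<and> v\<in>J2 \<omega> n \<and> w\<in>J2 \<omega> n \<and> msim \<omega> Gt u v \<and> msim \<omega> Gt v w \<and> u \<noteq> w} + card Nr"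
    by (rule lower[OF J])
  then have L: "Mt \<omega> n \<le> Lt \<omega> n + card Nr" unfolding Mt_def Lt_def GtG .
  show ?thesis using YZ M L upper by linarith
qed

theorem lemma5p1:
  fixes p q :: real and n :: nat
  assumes "0 \<le> p" "p \<le> 1" "0 \<le> q" "q \<le> 1" "2 \<le> n"
  shows "AE \<omega> in Pspace p q.
           int (Mt \<omega> n) - int (Lt \<omega> n) \<le> int (Yn \<omega> n) - int (Zn \<omega> n)
         \<and> int (Yn \<omega> n) - int (Zn \<omega> n) \<le> int (Mn \<omega> n)"
  using pointwise[OF assms(5)] by (intro AE_I2) blast

end
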